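(* Let $N\ge3$ and consider the complete-graph ensemble ($z=N-1$) described in the context. Fix a spring $e$ and $\bar\ell$ with $0<|\bar\ell|<1/2$, and let $F_{Y_{N-2}}$ be the cumulative distribution function of $$Y_{N-2}:=\frac{\Delta l_e-\mathbb E(\Delta l_e\mid\bar l_e=\bar\ell)}{\sqrt{\operatorname{Var}(\Delta l_e\mid\bar l_e=\bar\ell)}}$$ under the conditional law given $\bar l_e=\bar\ell$. Then $$\sup_{x\in\mathbb R}|F_{Y_{N-2}}(x)-\Phi_{0,1}(x)|\le\frac{C}{\sqrt{N-2}}\,\frac{\bar\ell^2+(1-|\bar\ell|)^2}{\sqrt{|\bar\ell|-\bar\ell^2}},$$ where $\Phi_{0,1}$ is the standard normal cdf and $C$ is the absolute constant of the Berry–Esseen theorem (one may take $C=0.4785$). In particular, the standardized conditional distribution converges to the standard normal at rate $(N-2)^{-1/2}$ as $N\to\infty$.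
   Context: Let the circle be $\mathbb R/\mathbb Z$. Node positions $x_1,\dots,x_N$ are i.i.d. uniform on $\mathbb R/\mathbb Z$ and every pair of nodes is joined by exactly one spring. A spring joining nodes $a<b$ is oriented from $a$ to $b$ with initial signed length $\bar l_e\in[-1/2,1/2)$, the representative of $x_b-x_a$ mod $1$ in $[-1/2,1/2)$ (uniform on $[-1/2,1/2)$). With $\mathbf C$ a signed cycle matrix (fundamental cycles of a spanning tree, arbitrarily oriented; entries $\pm1$ for edges on a cycle with agreeing/opposite orientation, $0$ otherwise), the relaxed lengths are $\boldsymbol l^*=\mathbf C^T(\mathbf C\mathbf C^T)^{-1}\mathbf C\bar{\boldsymbol l}$, the minimizer of $\tfrac12\boldsymbol l^T\boldsymbol l$ subject to preserving the integer winding numbers $\mathbf C\boldsymbol l=\mathbf C\bar{\boldsymbol l}$, and $\Delta\boldsymbol l=\boldsymbol l^*-\bar{\boldsymbol l}$. Berry–Esseen theorem: there is an absolute constant $C$ such that for i.i.d. $X_1,X_2,\dots$ with mean $0$, variance $\sigma^2>0$, $\mathbb E|X_1|^3=\rho<\infty$, the cdf $F_n$ of $(X_1+\dots+X_n)/(\sqrt n\sigma)$ satisfies $\sup_x|F_n(x)-\Phi_{0,1}(x)|\le C\rho/(\sigma^3\sqrt n)$. *)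

theory Defs
  imports "HOL-Probability.Probability"
begin

definition std_normal_cdf :: "real \<Rightarrow> real" where
  "std_normal_cdf x = measure (density lborel std_normal_density) {..x}"

definition berry_esseen_const :: "real \<Rightarrow> bool" where
  "berry_esseen_const C \<longleftrightarrow>
    (\<forall>(\<mu>::real measure) (n::nat) (\<sigma>::real) (\<rho>::real).
       prob_space \<mu> \<and> sets \<mu> = sets borel \<and>
       integrable \<mu> (\<lambda>t. t) \<and> integral\<^sup>L \<mu> (\<lambda>t. t) = 0 \<and>
       integrable \<mu> (\<lambda>t. t\<^sup>2) \<and> \<sigma> > 0 \<and> integral\<^sup>L \<mu> (\<lambda>t. t\<^sup>2) = \<sigma>\<^sup>2 \<and>
       integrable \<mu> (\<lambda>t. \<bar>t\<bar> ^ 3) \<and> \<rho> = integral\<^sup>L \<mu> (\<lambda>t. \<bar>t\<bar> ^ 3) \<and> n \<ge> 1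
     \<longrightarrow> (\<forall>x. \<bar>measure (PiM {..<n} (\<lambda>_. \<mu>))
                     {\<omega> \<in> space (PiM {..<n} (\<lambda>_. \<mu>)). (\<Sum>i<n. \<omega> i) / (sqrt (real n) * \<sigma>) \<le> x}
                   - std_normal_cdf x\<bar> \<le> C * \<rho> / (\<sigma> ^ 3 * sqrt (real n))))"

(* Nodes are 0..N-1; springs (edges) of the complete graph are pairs (a,b) with a < b < N,
   oriented from a to b. *)
definition springs :: "nat \<Rightarrow> (nat \<times> nat) set" where
  "springs N = {(a, b). a < b \<and> b < N}"

definition incid :: "nat \<Rightarrow> nat \<times> nat \<Rightarrow> real" where
  "incid v e = (if v = snd e then 1 else if v = fst e then -1 else 0)"

definition srep :: "real \<Rightarrow> real" where
  "srep t = t - of_int \<lfloor>t + 1/2\<rfloor>"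

(* initial signed lengths from positions x_v in [0,1) representing R/Z *)
definition init_len :: "(nat \<Rightarrow> real) \<Rightarrow> nat \<times> nat \<Rightarrow> real" where
  "init_len x e = srep (x (snd e) - x (fst e))"

definition spanning_tree :: "nat \<Rightarrow> (nat \<times> nat) set \<Rightarrow> bool" where
  "spanning_tree N T \<longleftrightarrow> T \<subseteq> springs N \<and> card T = N - 1 \<and>
     (\<forall>u<N. \<forall>v<N. (u, v) \<in> {(p, q). (p, q) \<in> T \<or> (q, p) \<in> T}\<^sup>*)"

definition fund_cycle_matrix ::
  "nat \<Rightarrow> (nat \<times> nat) set \<Rightarrow> (nat \<times> nat \<Rightarrow> nat \<times> nat \<Rightarrow> real) \<Rightarrow> bool" where
  "fund_cycle_matrix N T Cm \<longleftrightarrow>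
     (\<forall>f \<in> springs N - T.
        (\<forall>g. Cm f g \<in> {-1, 0, 1}) \<and>
        (\<forall>g. g \<notin> T \<union> {f} \<longrightarrow> Cm f g = 0) \<and>
        Cm f f \<noteq> 0 \<and>
        (\<forall>v<N. (\<Sum>g\<in>springs N. incid v g * Cm f g) = 0))"

definition same_windings ::
  "nat \<Rightarrow> (nat \<times> nat) set \<Rightarrow> (nat \<times> nat \<Rightarrow> nat \<times> nat \<Rightarrow> real) \<Rightarrow>
   (nat \<times> nat \<Rightarrow> real) \<Rightarrow> (nat \<times> nat \<Rightarrow> real) \<Rightarrow> bool" where
  "same_windings N T Cm l lb \<longleftrightarrow>
     (\<forall>f \<in> springs N - T. (\<Sum>g\<in>springs N. Cm f g * l g) = (\<Sum>g\<in>springs N. Cm f g * lb g))"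

(* relaxed lengths l*: the minimiser of (1/2) l^T l subject to C l = C lbar
   (vectors are functions on springs, taken to be 0 off the springs) *)
definition relaxed_len ::
  "nat \<Rightarrow> (nat \<times> nat) set \<Rightarrow> (nat \<times> nat \<Rightarrow> nat \<times> nat \<Rightarrow> real) \<Rightarrow>
   (nat \<times> nat \<Rightarrow> real) \<Rightarrow> nat \<times> nat \<Rightarrow> real" where
  "relaxed_len N T Cm lb = (THE l. (\<forall>g. g \<notin> springs N \<longrightarrow> l g = 0) \<and> same_windings N T Cm l lb \<and>
      (\<forall>l'. (\<forall>g. g \<notin> springs N \<longrightarrow> l' g = 0) \<and> same_windings N T Cm l' lb \<longrightarrow>
         (\<Sum>g\<in>springs N. (l g)\<^sup>2 / 2) \<le> (\<Sum>g\<in>springs N. (l' g)\<^sup>2 / 2)))"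

definition delta_len ::
  "nat \<Rightarrow> (nat \<times> nat) set \<Rightarrow> (nat \<times> nat \<Rightarrow> nat \<times> nat \<Rightarrow> real) \<Rightarrow>
   (nat \<Rightarrow> real) \<Rightarrow> nat \<times> nat \<Rightarrow> real" where
  "delta_len N T Cm x e = relaxed_len N T Cm (init_len x) e - init_len x e"

(* law of N i.i.d. uniform node positions on R/Z, represented in [0,1) *)
definition node_law :: "nat \<Rightarrow> (nat \<Rightarrow> real) measure" where
  "node_law N = PiM {..<N} (\<lambda>_. uniform_measure lborel {0..<1})"

(* Conditional law given lbar_(a,b) = ell: x_a uniform, x_b = x_a + ell (mod 1),
   all other nodes i.i.d. uniform; realised as the image of node_law under this map. *)
definition cond_config :: "nat \<Rightarrow> nat \<Rightarrow> real \<Rightarrow> (nat \<Rightarrow> real) \<Rightarrow> (nat \<Rightarrow> real)" where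
  "cond_config a b ell x = x(b := frac (x a + ell))"

end

theory Submission imports Defs "Jordan_Normal_Form.Determinant" begin

definition divg :: "nat \<Rightarrow> (nat \<times> nat \<Rightarrow> real) \<Rightarrow> nat \<Rightarrow> real" where
  "divg N l v = (\<Sum>g\<in>springs N. incid v g * l g)"

definition lstar :: "nat \<Rightarrow> (nat \<times> nat \<Rightarrow> real) \<Rightarrow> nat \<times> nat \<Rightarrow> real" where
  "lstar N lb g = (if g \<in> springs N then lb g - (divg N lb (snd g) - divg N lb (fst g)) / real N else 0)"

lemma springs_sub: "springs N \<subseteq> {..<N} \<times> {..<N}"
  by (auto simp: springs_def)

lemma finite_springs[simp]: "finite (springs N)"
  by (rule finite_subset[OF springs_sub]) auto

lemma sum_incid_vertex:
  assumes "g \<in> springs N"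
  shows "(\<Sum>v<N. incid v g * \<phi> v) = \<phi> (snd g) - \<phi> (fst g)"
proof -
  obtain p q where g: "g = (p, q)" "p < q" "q < N" using assms by (auto simp: springs_def)
  have "(\<Sum>v<N. incid v g * \<phi> v) = (\<Sum>v<N. (if v = q then \<phi> v else 0) + (if v = p then - \<phi> v else 0))"
    by (rule sum.cong) (use g in \<open>auto simp: incid_def\<close>)
  also have "\<dots> = \<phi> q - \<phi> p" using g by (simp add: sum.distrib)
  finally show ?thesis using g by simp
qed

lemma divg_split:
  assumes "v < N"
  shows "(\<Sum>g\<in>springs N. incid v g * h g) = (\<Sum>u<v. h (u, v)) - (\<Sum>u\<in>{v<..<N}. h (v, u))"
proof -
  have "(\<Sum>g\<in>springs N. incid v g * h g) =
        (\<Sum>g\<in>springs N. (if snd g = v then h g else 0) - (if fst g = v then h g else 0))"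
    by (rule sum.cong) (auto simp: incid_def springs_def)
  also have "\<dots> = (\<Sum>g\<in>springs N \<inter> {g. snd g = v}. h g) - (\<Sum>g\<in>springs N \<inter> {g. fst g = v}. h g)"
    by (simp add: sum_subtractf sum.inter_restrict)
  also have "springs N \<inter> {g. snd g = v} = (\<lambda>u. (u, v)) ` {..<v}"
    using assms by (auto simp: springs_def)
  also have "springs N \<inter> {g. fst g = v} = (\<lambda>u. (v, u)) ` {v<..<N}"
    using assms by (auto simp: springs_def)
  finally show ?thesis
    by (simp add: sum.reindex inj_on_def)
qed

lemma sum_divg: "(\<Sum>v<N. divg N l v) = 0"
proof -
  have "(\<Sum>v<N. divg N l v) = (\<Sum>g\<in>springs N. \<Sum>v<N. incid v g * l g)"
    unfolding divg_def by (rule sum.swap)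
  also have "\<dots> = 0"
  proof (rule sum.neutral, rule ballI)
    fix g assume "g \<in> springs N"
    from sum_incid_vertex[OF this, of "\<lambda>_. l g"] show "(\<Sum>v<N. incid v g * l g) = 0" by simp
  qed
  finally show ?thesis .
qed

lemma grad_div:
  assumes "v < N"
  shows "(\<Sum>g\<in>springs N. incid v g * (\<phi> (snd g) - \<phi> (fst g))) = real N * \<phi> v - (\<Sum>u<N. \<phi> u)"
proof -
  have c: "card {v<..<N} = N - 1 - v" by simp
  have s: "(\<Sum>u<N. \<phi> u) = (\<Sum>u<v. \<phi> u) + \<phi> v + (\<Sum>u\<in>{v<..<N}. \<phi> u)"
  proof -
    have "{..<N} = {..<v} \<union> {v} \<union> {v<..<N}" using assms by auto
    then have "(\<Sum>u<N. \<phi> u) = sum \<phi> ({..<v} \<union> {v} \<union> {v<..<N})" by simp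
    also have "\<dots> = (\<Sum>u<v. \<phi> u) + \<phi> v + (\<Sum>u\<in>{v<..<N}. \<phi> u)"
      by (subst sum.union_disjoint, simp, simp, force)+ simp
    finally show ?thesis .
  qed
  have "(\<Sum>g\<in>springs N. incid v g * (\<phi> (snd g) - \<phi> (fst g)))
      = (\<Sum>u<v. \<phi> v - \<phi> u) - (\<Sum>u\<in>{v<..<N}. \<phi> u - \<phi> v)"
    using divg_split[OF assms, of "\<lambda>g. \<phi> (snd g) - \<phi> (fst g)"] by simp
  also have "\<dots> = real v * \<phi> v - (\<Sum>u<v. \<phi> u) - (\<Sum>u\<in>{v<..<N}. \<phi> u) + real (N - 1 - v) * \<phi> v"
    by (simp add: sum_subtractf c)
  also have "\<dots> = real N * \<phi> v - (\<Sum>u<N. \<phi> u)"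
    using assms by (simp add: s of_nat_diff algebra_simps)
  finally show ?thesis .
qed

lemma divg_lstar:
  assumes "v < N"
  shows "divg N (lstar N lb) v = 0"
proof -
  define \<phi> where "\<phi> u = divg N lb u / real N" for u
  have "divg N (lstar N lb) v = (\<Sum>g\<in>springs N. incid v g * lb g - incid v g * (\<phi> (snd g) - \<phi> (fst g)))"
    unfolding divg_def lstar_def \<phi>_def
    by (rule sum.cong) (auto simp: algebra_simps diff_divide_distrib)
  also have "\<dots> = divg N lb v - (real N * \<phi> v - (\<Sum>u<N. \<phi> u))"
    by (simp add: sum_subtractf grad_div[OF assms] divg_def)
  also have "(\<Sum>u<N. \<phi> u) = 0" unfolding \<phi>_def
    by (simp add: sum_divide_distrib[symmetric] sum_divg)
  also have "real N * \<phi> v = divg N lb v" using assms by (simp add: \<phi>_def)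
  finally show ?thesis by simp
qed

lemma windings_lstar:
  assumes "fund_cycle_matrix N T Cm" "f \<in> springs N - T"
  shows "(\<Sum>g\<in>springs N. Cm f g * lstar N lb g) = (\<Sum>g\<in>springs N. Cm f g * lb g)"
proof -
  define \<phi> where "\<phi> u = divg N lb u / real N" for u
  have cyc: "\<And>v. v < N \<Longrightarrow> (\<Sum>g\<in>springs N. incid v g * Cm f g) = 0"
    using assms by (auto simp: fund_cycle_matrix_def)
  have "(\<Sum>g\<in>springs N. Cm f g * lstar N lb g) =
        (\<Sum>g\<in>springs N. Cm f g * lb g - Cm f g * (\<Sum>v<N. incid v g * \<phi> v))"
  proof (rule sum.cong[OF refl])
    fix g assume g: "g \<in> springs N"
    have "(\<Sum>v<N. incid v g * \<phi> v) = \<phi> (snd g) - \<phi> (fst g)" by (rule sum_incid_vertex[OF g])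
    moreover have "Cm f g * lstar N lb g = Cm f g * lb g - Cm f g * (\<phi> (snd g) - \<phi> (fst g))"
      using g by (simp add: lstar_def \<phi>_def diff_divide_distrib right_diff_distrib)
    ultimately show "Cm f g * lstar N lb g = Cm f g * lb g - Cm f g * (\<Sum>v<N. incid v g * \<phi> v)"
      by simp
  qed
  also have "\<dots> = (\<Sum>g\<in>springs N. Cm f g * lb g) - (\<Sum>v<N. \<phi> v * (\<Sum>g\<in>springs N. incid v g * Cm f g))"
  proof -
    have "(\<Sum>g\<in>springs N. Cm f g * (\<Sum>v<N. incid v g * \<phi> v)) = (\<Sum>g\<in>springs N. \<Sum>v<N. \<phi> v * (incid v g * Cm f g))"
      by (simp add: sum_distrib_left algebra_simps)
    also have "\<dots> = (\<Sum>v<N. \<Sum>g\<in>springs N. \<phi> v * (incid v g * Cm f g))" by (rule sum.swap)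
    also have "\<dots> = (\<Sum>v<N. \<phi> v * (\<Sum>g\<in>springs N. incid v g * Cm f g))" by (simp add: sum_distrib_left)
    finally show ?thesis by (simp add: sum_subtractf)
  qed
  also have "(\<Sum>v<N. \<phi> v * (\<Sum>g\<in>springs N. incid v g * Cm f g)) = 0"
    by (simp add: cyc)
  finally show ?thesis by simp
qed

lemma tree_flow_zero:
  assumes st: "spanning_tree N T" and N: "N \<ge> 1"
    and off: "\<And>g. g \<in> springs N - T \<Longrightarrow> r g = 0"
    and dv: "\<And>v. v < N \<Longrightarrow> divg N r v = 0"
    and gT: "g \<in> T"
  shows "r g = 0"
proof -
  define n where "n = N - 1"
  have Tsub: "T \<subseteq> springs N" and cT: "card T = n"
    and conn: "\<And>u v. u < N \<Longrightarrow> v < N \<Longrightarrow> (u, v) \<in> {(p, q). (p, q) \<in> T \<or> (q, p) \<in> T}\<^sup>*"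
    using st by (auto simp: spanning_tree_def n_def)
  have fT: "finite T" using finite_subset[OF Tsub] by simp
  obtain h where h: "bij_betw h {0..<n} T"
    using ex_bij_betw_nat_finite[OF fT] cT by auto
  define A :: "real mat" where "A = mat n n (\<lambda>(i, j). incid j (h i))"
  have A: "A \<in> carrier_mat n n" by (simp add: A_def)
  have detA: "det A \<noteq> 0"
  proof
    assume "det A = 0"
    then obtain x where x: "x \<in> carrier_vec n" "x \<noteq> 0\<^sub>v n" "A *\<^sub>v x = 0\<^sub>v n"
      using det_0_iff_vec_prod_zero[OF A] by auto
    define \<psi> where "\<psi> j = (if j < n then x $ j else 0)" for j
    have edge: "\<psi> (snd g) = \<psi> (fst g)" if "g \<in> T" for g
    proof -
      have "g \<in> h ` {0..<n}" using h that by (simp add: bij_betw_def)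
      then obtain i where i: "i < n" "g = h i" by auto
      have gs: "g \<in> springs N" using that Tsub by auto
      have "0 = (A *\<^sub>v x) $ i" using x i by simp
      also have "\<dots> = (\<Sum>j<n. incid j g * x $ j)"
        using x(1) i A by (simp add: A_def scalar_prod_def lessThan_atLeast0 algebra_simps)
      also have "\<dots> = (\<Sum>j<N. incid j g * \<psi> j)"
      proof -
        have "{..<N} = insert n {..<n}" using N by (auto simp: n_def)
        then show ?thesis by (simp add: \<psi>_def)
      qed
      also have "\<dots> = \<psi> (snd g) - \<psi> (fst g)" by (rule sum_incid_vertex[OF gs])
      finally show ?thesis by simp
    qed
    have "\<psi> u = \<psi> w" if "(u, w) \<in> {(p, q). (p, q) \<in> T \<or> (q, p) \<in> T}\<^sup>*" for u w
      using that
    proof (induction rule: rtrancl_induct)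
      case (step y z)
      then show ?case using edge[of "(y, z)"] edge[of "(z, y)"] by auto
    qed simp
    then have "\<psi> u = 0" if "u < N" for u
      using conn[OF that, of n] N by (simp add: n_def \<psi>_def)
    then have "x = 0\<^sub>v n"
    proof (intro eq_vecI)
      fix i assume "i < dim_vec (0\<^sub>v n :: real vec)"
      then have "i < n" by simp
      then show "x $ i = (0\<^sub>v n :: real vec) $ i"
        using \<open>\<And>u. u < N \<Longrightarrow> \<psi> u = 0\<close>[of i] by (simp add: \<psi>_def n_def)
    qed (use x(1) in simp)
    with x(2) show False by simp
  qed
  define y where "y = vec n (\<lambda>i. r (h i))"
  have At: "A\<^sup>T \<in> carrier_mat n n" using A by simp
  have "A\<^sup>T *\<^sub>v y = 0\<^sub>v n"
  proof (rule eq_vecI)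
    fix j assume j: "j < dim_vec (0\<^sub>v n :: real vec)"
    then have jn: "j < n" by simp
    have "(A\<^sup>T *\<^sub>v y) $ j = (\<Sum>i\<in>{0..<n}. incid j (h i) * r (h i))"
      using jn by (simp add: A_def y_def scalar_prod_def)
    also have "\<dots> = (\<Sum>g\<in>T. incid j g * r g)"
      using sum.reindex_bij_betw[OF h, of "\<lambda>g. incid j g * r g"] by simp
    also have "\<dots> = (\<Sum>g\<in>springs N. incid j g * r g)"
      by (rule sum.mono_neutral_left) (use Tsub off in auto)
    also have "\<dots> = 0" using dv[of j] jn by (simp add: divg_def n_def)
    finally show "(A\<^sup>T *\<^sub>v y) $ j = (0\<^sub>v n :: real vec) $ j" using jn by simp
  qed (simp add: A_def)
  moreover have "det (A\<^sup>T) \<noteq> 0" using detA det_transpose[OF A] by simp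
  ultimately have "y = 0\<^sub>v n"
    using det_0_iff_vec_prod_zero[OF At] by (metis carrier_vec_dim_vec dim_vec y_def)
  moreover have "g \<in> h ` {0..<n}" using h gT by (simp add: bij_betw_def)
  then obtain i where "i < n" "g = h i" by auto
  ultimately show ?thesis by (metis index_vec index_zero_vec(1) y_def)
qed

lemma lstar_orth:
  assumes st: "spanning_tree N T" and fc: "fund_cycle_matrix N T Cm" and N: "N \<ge> 1"
    and d: "\<And>f. f \<in> springs N - T \<Longrightarrow> (\<Sum>g\<in>springs N. Cm f g * d g) = 0"
  shows "(\<Sum>g\<in>springs N. lstar N lb g * d g) = 0"
proof -
  define c where "c f = lstar N lb f * Cm f f" for f
  define r where "r g = lstar N lb g - (\<Sum>f\<in>springs N - T. c f * Cm f g)" for g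
  have Cmv: "\<And>f g. f \<in> springs N - T \<Longrightarrow> Cm f g \<in> {-1, 0, 1}"
    and Cmz: "\<And>f g. f \<in> springs N - T \<Longrightarrow> g \<notin> T \<union> {f} \<Longrightarrow> Cm f g = 0"
    and Cmd: "\<And>f. f \<in> springs N - T \<Longrightarrow> Cm f f \<noteq> 0"
    and Cmc: "\<And>f v. f \<in> springs N - T \<Longrightarrow> v < N \<Longrightarrow> (\<Sum>g\<in>springs N. incid v g * Cm f g) = 0"
    using fc unfolding fund_cycle_matrix_def by blast+
  have fin: "finite (springs N - T)" by simp
  have off: "r g = 0" if g: "g \<in> springs N - T" for g
  proof -
    have "(\<Sum>f\<in>springs N - T. c f * Cm f g) = c g * Cm g g + (\<Sum>f\<in>springs N - T - {g}. c f * Cm f g)"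
      using g fin by (simp add: sum.remove)
    also have "(\<Sum>f\<in>springs N - T - {g}. c f * Cm f g) = 0"
    proof (rule sum.neutral, rule ballI)
      fix f assume "f \<in> springs N - T - {g}"
      then have "Cm f g = 0" using g by (intro Cmz) auto
      then show "c f * Cm f g = 0" by simp
    qed
    also have "Cm g g * Cm g g = 1" using Cmv[OF g, of g] Cmd[OF g] by auto
    then have "c g * Cm g g = lstar N lb g" by (simp add: c_def mult.assoc)
    finally show ?thesis by (simp add: r_def)
  qed
  have dv: "divg N r v = 0" if v: "v < N" for v
  proof -
    have "divg N r v = divg N (lstar N lb) v - (\<Sum>g\<in>springs N. \<Sum>f\<in>springs N - T. c f * (incid v g * Cm f g))"
      unfolding divg_def r_def by (simp add: sum_subtractf right_diff_distrib sum_distrib_left algebra_simps)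
    also have "(\<Sum>g\<in>springs N. \<Sum>f\<in>springs N - T. c f * (incid v g * Cm f g))
        = (\<Sum>f\<in>springs N - T. c f * (\<Sum>g\<in>springs N. incid v g * Cm f g))"
      by (subst sum.swap) (simp add: sum_distrib_left)
    also have "\<dots> = 0" using Cmc v by simp
    finally show ?thesis using divg_lstar[OF v] by simp
  qed
  have rz: "r g = 0" if "g \<in> springs N" for g
  proof (cases "g \<in> T")
    case True
    show ?thesis by (rule tree_flow_zero[OF st N _ dv True]) (use off in auto)
  next
    case False then show ?thesis using off that by auto
  qed
  have "(\<Sum>g\<in>springs N. lstar N lb g * d g) = (\<Sum>g\<in>springs N. \<Sum>f\<in>springs N - T. c f * (Cm f g * d g))"
  proof (rule sum.cong[OF refl])
    fix g assume "g \<in> springs N"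
    then have "lstar N lb g = (\<Sum>f\<in>springs N - T. c f * Cm f g)" using rz[of g] by (simp add: r_def)
    then show "lstar N lb g * d g = (\<Sum>f\<in>springs N - T. c f * (Cm f g * d g))"
      by (simp add: sum_distrib_right mult.assoc)
  qed
  also have "\<dots> = (\<Sum>f\<in>springs N - T. c f * (\<Sum>g\<in>springs N. Cm f g * d g))"
    by (subst sum.swap) (simp add: sum_distrib_left)
  also have "\<dots> = 0" using d by simp
  finally show ?thesis .
qed

lemma relaxed_eq:
  assumes st: "spanning_tree N T" and fc: "fund_cycle_matrix N T Cm" and N: "N \<ge> 1"
  shows "relaxed_len N T Cm lb = lstar N lb"
proof -
  let ?Q = "\<lambda>l. (\<forall>g. g \<notin> springs N \<longrightarrow> l g = 0) \<and> same_windings N T Cm l lb"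
  have Qs: "?Q (lstar N lb)"
    using windings_lstar[OF fc] by (auto simp: lstar_def same_windings_def)
  have key: "(\<Sum>g\<in>springs N. (l g)\<^sup>2) = (\<Sum>g\<in>springs N. (lstar N lb g)\<^sup>2) + (\<Sum>g\<in>springs N. (l g - lstar N lb g)\<^sup>2)"
    if "?Q l" for l
  proof -
    have d: "(\<Sum>g\<in>springs N. Cm f g * (l g - lstar N lb g)) = 0" if f: "f \<in> springs N - T" for f
      using \<open>?Q l\<close> Qs f by (simp add: same_windings_def right_diff_distrib sum_subtractf)
    have o: "(\<Sum>g\<in>springs N. lstar N lb g * (l g - lstar N lb g)) = 0"
      by (rule lstar_orth[OF st fc N d])
    have "(\<Sum>g\<in>springs N. (l g)\<^sup>2) = (\<Sum>g\<in>springs N. (lstar N lb g)\<^sup>2 + 2 * (lstar N lb g * (l g - lstar N lb g)) + (l g - lstar N lb g)\<^sup>2)"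
      by (rule sum.cong) (auto simp: power2_eq_square algebra_simps)
    also have "\<dots> = (\<Sum>g\<in>springs N. (lstar N lb g)\<^sup>2) + 2 * (\<Sum>g\<in>springs N. lstar N lb g * (l g - lstar N lb g)) + (\<Sum>g\<in>springs N. (l g - lstar N lb g)\<^sup>2)"
      by (simp add: sum.distrib sum_distrib_left)
    finally show ?thesis using o by simp
  qed
  show ?thesis
    unfolding relaxed_len_def
  proof (rule the_equality)
    show "(\<forall>g. g \<notin> springs N \<longrightarrow> lstar N lb g = 0) \<and> same_windings N T Cm (lstar N lb) lb \<and> (\<forall>l'. ?Q l' \<longrightarrow> (\<Sum>g\<in>springs N. (lstar N lb g)\<^sup>2 / 2) \<le> (\<Sum>g\<in>springs N. (l' g)\<^sup>2 / 2))"
    proof (intro conjI allI impI)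
      show "\<And>g. g \<notin> springs N \<Longrightarrow> lstar N lb g = 0" "same_windings N T Cm (lstar N lb) lb" using Qs by auto
    next
      fix l' assume "?Q l'"
      from key[OF this] have "(\<Sum>g\<in>springs N. (lstar N lb g)\<^sup>2) \<le> (\<Sum>g\<in>springs N. (l' g)\<^sup>2)"
        by (simp add: sum_nonneg)
      then show "(\<Sum>g\<in>springs N. (lstar N lb g)\<^sup>2 / 2) \<le> (\<Sum>g\<in>springs N. (l' g)\<^sup>2 / 2)"
        by (simp add: sum_divide_distrib[symmetric])
    qed
  next
    fix l assume H: "(\<forall>g. g \<notin> springs N \<longrightarrow> l g = 0) \<and> same_windings N T Cm l lb \<and> (\<forall>l'. ?Q l' \<longrightarrow> (\<Sum>g\<in>springs N. (l g)\<^sup>2 / 2) \<le> (\<Sum>g\<in>springs N. (l' g)\<^sup>2 / 2))"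
    then have "(\<Sum>g\<in>springs N. (l g)\<^sup>2 / 2) \<le> (\<Sum>g\<in>springs N. (lstar N lb g)\<^sup>2 / 2)"
      using Qs by blast
    then have le: "(\<Sum>g\<in>springs N. (l g)\<^sup>2) \<le> (\<Sum>g\<in>springs N. (lstar N lb g)\<^sup>2)"
      by (simp add: sum_divide_distrib[symmetric])
    have nn: "(\<Sum>g\<in>springs N. (l g - lstar N lb g)\<^sup>2) \<ge> 0" by (simp add: sum_nonneg)
    have "(\<Sum>g\<in>springs N. (l g - lstar N lb g)\<^sup>2) = 0"
      using key[of l] H le nn by auto
    then have "\<forall>g\<in>springs N. (l g - lstar N lb g)\<^sup>2 = 0"
      by (subst (asm) sum_nonneg_eq_0_iff) auto
    then show "l = lstar N lb"
      using H by (auto simp: fun_eq_iff lstar_def)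
  qed
qed

lemma srep_int: "srep (t + of_int k) = srep t"
proof -
  have "\<lfloor>t + of_int k + 1/2\<rfloor> = \<lfloor>t + 1/2\<rfloor> + k"
    by (metis add.commute add.left_commute floor_add_int)
  then show ?thesis by (simp add: srep_def)
qed

lemma srep_small: "-1/2 \<le> t \<Longrightarrow> t < 1/2 \<Longrightarrow> srep t = t"
proof -
  assume "-1/2 \<le> t" "t < 1/2"
  then have "\<lfloor>t + 1/2\<rfloor> = 0" by (simp add: floor_eq_iff)
  then show ?thesis by (simp add: srep_def)
qed

lemma srep_neg:
  assumes "frac (t + 1/2) \<noteq> 0"
  shows "srep (- t) = - srep t"
proof -
  define k where "k = \<lfloor>t + 1/2\<rfloor>"
  have k1: "of_int k \<le> t + 1/2" "t + 1/2 < of_int k + 1" unfolding k_def by linarith+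
  have "t + 1/2 \<noteq> of_int k" using assms by (auto simp: frac_def k_def)
  with k1 have k2: "of_int k < t + 1/2" by simp
  have "\<lfloor>- t + 1/2\<rfloor> = - k"
    unfolding floor_eq_iff using k1 k2 by simp
  then show ?thesis by (simp add: srep_def k_def)
qed

lemma srep_eqI: "t' = t + of_int k \<Longrightarrow> srep t' = srep t"
  using srep_int by simp

lemma floor_shift_measurable: "(\<lambda>t::real. real_of_int \<lfloor>t + c\<rfloor>) \<in> borel_measurable borel"
  by (rule measurable_compose[OF _ borel_measurable_real_floor]) measurable

lemma srep_measurable[measurable]: "srep \<in> borel_measurable borel"
  unfolding srep_def[abs_def] by (rule borel_measurable_diff[OF measurable_ident_sets[OF refl] floor_shift_measurable])

lemma frac_measurable[measurable]: "(frac :: real \<Rightarrow> real) \<in> borel_measurable borel"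
  unfolding frac_def[abs_def] by (rule borel_measurable_diff[OF measurable_ident_sets[OF refl] borel_measurable_real_floor])

definition tt :: "(nat \<Rightarrow> real) \<Rightarrow> nat \<Rightarrow> nat \<Rightarrow> real" where
  "tt x v c = (if c < v then srep (x v - x c) else - srep (x c - x v))"

lemma divg_init:
  assumes "v < N"
  shows "divg N (init_len x) v = (\<Sum>c\<in>{..<N} - {v}. tt x v c)"
proof -
  have "divg N (init_len x) v = (\<Sum>u<v. srep (x v - x u)) - (\<Sum>u\<in>{v<..<N}. srep (x u - x v))"
    unfolding divg_def using divg_split[OF assms, of "init_len x"] by (simp add: init_len_def)
  also have "\<dots> = (\<Sum>c<v. tt x v c) + (\<Sum>c\<in>{v<..<N}. tt x v c)"
    by (simp add: tt_def sum_negf)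
  also have "\<dots> = (\<Sum>c\<in>{..<v} \<union> {v<..<N}. tt x v c)"
    by (rule sum.union_disjoint[symmetric]) auto
  also have "{..<v} \<union> {v<..<N} = {..<N} - {v}" using assms by auto
  finally show ?thesis .
qed

lemma srep_cond:
  assumes "\<bar>ell\<bar> < 1/2"
  shows "srep (frac (s + ell) - s) = ell"
proof -
  have "srep (frac (s + ell) - s) = srep ell" by (rule srep_eqI[where k = "- \<lfloor>s + ell\<rfloor>"]) (simp add: frac_def)
  then show ?thesis using assms by (simp add: srep_small)
qed

lemma D_formula:
  assumes st: "spanning_tree N T" and fc: "fund_cycle_matrix N T Cm"
    and ab: "a < b" "b < N" and l: "\<bar>ell\<bar> < 1/2"
  shows "delta_len N T Cm (cond_config a b ell x) (a, b)
     = - (2 * ell + (\<Sum>c\<in>{..<N} - {a, b}. tt (cond_config a b ell x) b c - tt (cond_config a b ell x) a c)) / real N"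
proof -
  define x' where "x' = cond_config a b ell x"
  define J where "J = {..<N} - {a, b}"
  have N: "N \<ge> 1" using ab by simp
  have ab_s: "(a, b) \<in> springs N" using ab by (simp add: springs_def)
  have xa: "x' a = x a" using ab by (simp add: x'_def cond_config_def)
  have xb: "x' b = frac (x a + ell)" by (simp add: x'_def cond_config_def)
  have lab: "srep (x' b - x' a) = ell"
    unfolding xa xb using l by (rule srep_cond)
  have fJ: "finite J" by (simp add: J_def)
  have Jsub: "J \<subseteq> {..<N} - {a}" by (auto simp: J_def)
  have aJ: "a \<notin> J" "b \<notin> J" by (auto simp: J_def)
  have e1: "delta_len N T Cm x' (a, b) = - (divg N (init_len x') b - divg N (init_len x') a) / real N"
    unfolding delta_len_def relaxed_eq[OF st fc N] lstar_def using ab_s by (simp add: minus_divide_left)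
  have Sb: "{..<N} - {b} = insert a J" using ab by (auto simp: J_def)
  have Sa: "{..<N} - {a} = insert b J" using ab by (auto simp: J_def)
  have db: "divg N (init_len x') b = tt x' b a + (\<Sum>c\<in>J. tt x' b c)"
    unfolding divg_init[OF ab(2), of x'] Sb using sum.insert[OF fJ aJ(1)] .
  have da: "divg N (init_len x') a = tt x' a b + (\<Sum>c\<in>J. tt x' a c)"
    using sum.insert[OF fJ aJ(2)] unfolding divg_init[OF order.strict_trans[OF ab], of x'] Sa .
  have t1: "tt x' b a = ell" using ab lab by (simp add: tt_def)
  have t2: "tt x' a b = - ell" using ab lab by (simp add: tt_def)
  have "delta_len N T Cm x' (a, b) = - (2 * ell + ((\<Sum>c\<in>J. tt x' b c) - (\<Sum>c\<in>J. tt x' a c))) / real N"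
    unfolding e1 db da t1 t2 by simp
  then show ?thesis unfolding x'_def J_def by (simp only: sum_subtractf)
qed

definition Zf :: "real \<Rightarrow> real \<Rightarrow> real" where
  "Zf ell u = srep (ell - frac u) - srep (- frac u)"

lemma Z_exact:
  assumes ab: "a < b" and c: "c \<noteq> a" "c \<noteq> b"
    and g1: "frac (frac (x c - x a) + 1/2) \<noteq> 0" and g2: "frac (frac (x c - x a) - ell + 1/2) \<noteq> 0"
  shows "tt (cond_config a b ell x) b c - tt (cond_config a b ell x) a c = Zf ell (frac (x c - x a))"
proof -
  define u where "u = frac (x c - x a)"
  have xb: "cond_config a b ell x b = frac (x a + ell)" by (simp add: cond_config_def)
  have xa: "cond_config a b ell x a = x a" and xc: "cond_config a b ell x c = x c"
    using ab c by (auto simp: cond_config_def)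
  have e1: "srep (frac (x a + ell) - x c) = srep (ell - u)"
    by (rule srep_eqI[where k = "- \<lfloor>x a + ell\<rfloor> - \<lfloor>x c - x a\<rfloor>"]) (simp add: u_def frac_def)
  have e2: "srep (x a - x c) = srep (- u)"
    by (rule srep_eqI[where k = "- \<lfloor>x c - x a\<rfloor>"]) (simp add: u_def frac_def)
  have tb: "tt (cond_config a b ell x) b c = srep (ell - u)"
  proof (cases "c < b")
    case True then show ?thesis by (simp add: tt_def xb xc e1)
  next
    case False
    have "srep (ell - u) = srep (- (u - ell))" by simp
    also have "\<dots> = - srep (u - ell)" by (rule srep_neg) (use g2 in \<open>simp add: u_def\<close>)
    finally have *: "srep (ell - u) = - srep (u - ell)" .
    have "srep (x c - frac (x a + ell)) = srep (u - ell)"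
      by (rule srep_eqI[where k = "\<lfloor>x a + ell\<rfloor> + \<lfloor>x c - x a\<rfloor>"]) (simp add: u_def frac_def)
    then show ?thesis using False by (simp add: tt_def xb xc *)
  qed
  have ta: "tt (cond_config a b ell x) a c = srep (- u)"
  proof (cases "c < a")
    case True then show ?thesis by (simp add: tt_def xa xc e2)
  next
    case False
    have "srep (- u) = - srep u" by (rule srep_neg) (use g1 in \<open>simp add: u_def\<close>)
    moreover have "srep (x c - x a) = srep u"
      by (rule srep_eqI[where k = "\<lfloor>x c - x a\<rfloor>"]) (simp add: u_def frac_def)
    ultimately show ?thesis using False by (simp add: tt_def xa xc)
  qed
  show ?thesis using tb ta by (simp add: Zf_def u_def)
qed

definition Uu :: "real measure" where "Uu = uniform_measure lborel {0..<1}"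

lemma lborel_01: "emeasure lborel {0..<1::real} = 1" by simp

lemma Uu_prob: "prob_space Uu"
  unfolding Uu_def by (rule prob_space_uniform_measure) auto

lemma sets_Uu[simp, measurable_cong]: "sets Uu = sets borel"
  by (simp add: Uu_def)

lemma space_Uu[simp]: "space Uu = UNIV"
  by (simp add: Uu_def)

lemma emeasure_Uu: "B \<in> sets borel \<Longrightarrow> emeasure Uu B = emeasure lborel ({0..<1} \<inter> B)"
  unfolding Uu_def by (subst emeasure_uniform_measure) (auto simp: divide_ennreal_def)

lemma transl_lborel: "S \<in> sets borel \<Longrightarrow> emeasure lborel ((\<lambda>t. c + t) -` S) = emeasure lborel (S::real set)"
proof -
  assume S: "S \<in> sets borel"
  have "emeasure (distr lborel borel ((+) c)) S = emeasure lborel ((+) c -` S \<inter> space lborel)"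
    using S by (intro emeasure_distr) auto
  then show ?thesis by (simp add: lborel_distr_plus)
qed

lemma frac_small: "0 \<le> v \<Longrightarrow> v < 1 \<Longrightarrow> frac v = v"
  by (simp add: frac_eq)

lemma frac_negsmall: "-1 \<le> v \<Longrightarrow> v < 0 \<Longrightarrow> frac v = v + 1"
  using frac_1_eq[of v] frac_small[of "v + 1"] by simp

lemma frac_shift_period: "frac (t - y) = frac (t - frac y)"
  by (metis frac_diff_simp)

lemma rot_emeasure:
  fixes y :: real and B :: "real set"
  assumes B: "B \<in> sets borel"
  shows "emeasure Uu {t. frac (t - y) \<in> B} = emeasure Uu B"
proof -
  define z where "z = frac y"
  have z: "0 \<le> z" "z < 1" by (auto simp: z_def frac_lt_1)
  have fs: "frac (t - y) = frac (t - z)" for t unfolding z_def by (rule frac_shift_period)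
  have meas: "{t. frac (t - y) \<in> B} \<in> sets borel"
  proof -
    have "(\<lambda>t. frac (t - y)) \<in> borel_measurable borel" by measurable
    then have "(\<lambda>t. frac (t - y)) -` B \<inter> space borel \<in> sets borel" using B by (rule measurable_sets)
    then show ?thesis by (simp add: vimage_def)
  qed
  define A1 where "A1 = (\<lambda>t. - z + t) -` (B \<inter> {0..<1 - z})"
  define A2 where "A2 = (\<lambda>t. (1 - z) + t) -` (B \<inter> {1 - z..<1})"
  have eq: "{0..<1} \<inter> {t. frac (t - y) \<in> B} = A1 \<union> A2"
  proof (intro equalityI subsetI)
    fix t assume t: "t \<in> {0..<1} \<inter> {t. frac (t - y) \<in> B}"
    then have tB: "frac (t - z) \<in> B" by (simp add: fs)
    show "t \<in> A1 \<union> A2"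
    proof (cases "z \<le> t")
      case True
      then have "frac (t - z) = t - z" using t z by (intro frac_small) auto
      then show ?thesis using tB True t by (auto simp: A1_def)
    next
      case False
      then have "frac (t - z) = t - z + 1" using t z by (intro frac_negsmall) auto
      then have "1 - z + t = frac (t - z)" by simp
      then have "1 - z + t \<in> B" using tB by metis
      then show ?thesis using False t z by (auto simp: A2_def)
    qed
  next
    fix t assume "t \<in> A1 \<union> A2"
    then show "t \<in> {0..<1} \<inter> {t. frac (t - y) \<in> B}"
    proof
      assume "t \<in> A1"
      then have t: "z \<le> t" "t < 1" "t - z \<in> B" by (auto simp: A1_def)
      then have "frac (t - z) = t - z" using z by (intro frac_small) auto
      then show ?thesis using t z by (auto simp: fs)
    next
      assume "t \<in> A2"
      then have t: "0 \<le> t" "t < z" "1 - z + t \<in> B" by (auto simp: A2_def)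
      then have "frac (t - z) = t - z + 1" using z by (intro frac_negsmall) auto
      then have "frac (t - z) = 1 - z + t" by simp
      then show ?thesis using t z by (auto simp: fs)
    qed
  qed
  have B1: "B \<inter> {0..<1 - z} \<in> sets borel" and B2: "B \<inter> {1 - z..<1} \<in> sets borel" using B by auto
  have A1s: "A1 \<in> sets borel" unfolding A1_def using B1 by (rule measurable_sets_borel[rotated]) simp
  have A2s: "A2 \<in> sets borel" unfolding A2_def using B2 by (rule measurable_sets_borel[rotated]) simp
  have "emeasure Uu {t. frac (t - y) \<in> B} = emeasure lborel (A1 \<union> A2)"
    using meas by (simp add: emeasure_Uu eq)
  also have "\<dots> = emeasure lborel A1 + emeasure lborel A2"
    using A1s A2s by (intro plus_emeasure[symmetric]) (auto simp: A1_def A2_def)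
  also have "emeasure lborel A1 = emeasure lborel (B \<inter> {0..<1 - z})"
    unfolding A1_def using B1 by (rule transl_lborel)
  also have "emeasure lborel A2 = emeasure lborel (B \<inter> {1 - z..<1})"
    unfolding A2_def using B2 by (rule transl_lborel)
  also have "emeasure lborel (B \<inter> {0..<1 - z}) + emeasure lborel (B \<inter> {1 - z..<1})
      = emeasure lborel ((B \<inter> {0..<1 - z}) \<union> (B \<inter> {1 - z..<1}))"
    using B1 B2 by (intro plus_emeasure) auto
  also have "(B \<inter> {0..<1 - z}) \<union> (B \<inter> {1 - z..<1}) = {0..<1} \<inter> B" using z by auto
  finally show ?thesis using B by (simp add: emeasure_Uu)
qed

definition Psi :: "nat \<Rightarrow> nat \<Rightarrow> (nat \<Rightarrow> real) \<Rightarrow> (nat \<Rightarrow> real)" where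
  "Psi N a x = (\<lambda>c\<in>{..<N}. if c = a then x a else frac (x c - x a))"

lemma node_law_Uu: "node_law N = PiM {..<N} (\<lambda>_. Uu)"
  by (simp add: node_law_def Uu_def)

lemma Psi_measurable[measurable]:
  assumes "a < N"
  shows "Psi N a \<in> measurable (PiM {..<N} (\<lambda>_. Uu)) (PiM {..<N} (\<lambda>_. Uu))"
  unfolding Psi_def
proof (rule measurable_restrict)
  fix c assume "c \<in> {..<N}"
  show "(\<lambda>x. if c = a then x a else frac (x c - x a)) \<in> measurable (PiM {..<N} (\<lambda>_. Uu)) Uu"
  proof (cases "c = a")
    case True
    have "a \<in> {..<N}" using assms by simp
    then have "(\<lambda>x. x a) \<in> measurable (PiM {..<N} (\<lambda>_. Uu)) Uu" by (rule measurable_component_singleton)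
    then show ?thesis using True by simp
  next
    case False
    have aI: "a \<in> {..<N}" using assms by simp
    have m1: "(\<lambda>x. x c) \<in> borel_measurable (PiM {..<N} (\<lambda>_. Uu))"
      using measurable_component_singleton[OF \<open>c \<in> {..<N}\<close>, of "\<lambda>_. Uu"]
      by (simp add: measurable_cong_sets[OF refl sets_Uu])
    have m2: "(\<lambda>x. x a) \<in> borel_measurable (PiM {..<N} (\<lambda>_. Uu))"
      using measurable_component_singleton[OF aI, of "\<lambda>_. Uu"]
      by (simp add: measurable_cong_sets[OF refl sets_Uu])
    have "(\<lambda>x. frac (x c - x a)) \<in> borel_measurable (PiM {..<N} (\<lambda>_. Uu))"
      using measurable_compose[OF borel_measurable_diff[OF m1 m2] frac_measurable] by simp
    then show ?thesis using False by (simp add: measurable_cong_sets[OF refl sets_Uu[symmetric]])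
  qed
qed

lemma shear:
  assumes aN: "a < N"
  shows "distr (PiM {..<N} (\<lambda>_. Uu)) (PiM {..<N} (\<lambda>_. Uu)) (Psi N a) = PiM {..<N} (\<lambda>_. Uu)"
proof -
  interpret product_prob_space "\<lambda>_::nat. Uu" by (rule product_prob_spaceI) (rule Uu_prob)
  define M where "M = PiM {..<N} (\<lambda>_::nat. Uu)"
  define I' where "I' = {..<N} - {a}"
  have NI: "{..<N} = insert a I'" "a \<notin> I'" "finite I'" using aN by (auto simp: I'_def)
  show ?thesis
  proof (rule PiM_eqI)
    show "finite {..<N}" by simp
    show "sets (distr (PiM {..<N} (\<lambda>_. Uu)) (PiM {..<N} (\<lambda>_. Uu)) (Psi N a)) = sets (PiM {..<N} (\<lambda>_. Uu))"
      by simp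
  next
    fix A assume A: "\<And>i. i \<in> {..<N} \<Longrightarrow> A i \<in> sets Uu"
    define X where "X = Psi N a -` Pi\<^sub>E {..<N} A \<inter> space M"
    have PA: "Pi\<^sub>E {..<N} A \<in> sets M" unfolding M_def using A by (intro sets_PiM_I_finite) auto
    have Xs: "X \<in> sets M" unfolding X_def M_def
      using measurable_sets[OF Psi_measurable[OF aN] PA[unfolded M_def]] .
    define By where "By y = (\<lambda>c. {t. frac (t - y) \<in> A c})" for y
    have Bys: "By y c \<in> sets Uu" if "c \<in> I'" for y c
    proof -
      have "(\<lambda>t. frac (t - y)) -` A c \<inter> space borel \<in> sets borel"
        using A[of c] that by (intro measurable_sets[of _ borel borel]) (auto simp: I'_def)
      then show ?thesis by (simp add: By_def vimage_def)
    qed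
    have ind: "indicator X (x(a := y)) = (indicator (A a) y * indicator (Pi\<^sub>E I' (By y)) x :: ennreal)"
      if x: "x \<in> space (PiM I' (\<lambda>_. Uu))" for x y
    proof -
      have xe: "x \<in> extensional I'" using x by (simp add: space_PiM PiE_def)
      have sp: "x(a := y) \<in> space M"
        using x NI by (auto simp: M_def space_PiM PiE_def extensional_def)
      have "x(a := y) \<in> X \<longleftrightarrow> y \<in> A a \<and> x \<in> Pi\<^sub>E I' (By y)"
      proof -
        have ps: "Psi N a (x(a := y)) = (\<lambda>c\<in>{..<N}. if c = a then y else frac (x c - y))"
          by (auto simp: Psi_def fun_eq_iff)
        have "x(a := y) \<in> X \<longleftrightarrow> Psi N a (x(a := y)) \<in> Pi\<^sub>E {..<N} A"
          using sp by (simp add: X_def)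
        also have "\<dots> \<longleftrightarrow> (\<forall>c<N. (if c = a then y else frac (x c - y)) \<in> A c)"
          unfolding ps restrict_PiE_iff by auto
        also have "\<dots> \<longleftrightarrow> y \<in> A a \<and> (\<forall>c\<in>I'. frac (x c - y) \<in> A c)"
          using NI by auto
        also have "\<dots> \<longleftrightarrow> y \<in> A a \<and> x \<in> Pi\<^sub>E I' (By y)"
          using xe by (auto simp: PiE_def By_def)
        finally show ?thesis .
      qed
      then show ?thesis
        by (cases "y \<in> A a"; cases "x \<in> Pi\<^sub>E I' (By y)") (simp_all add: indicator_def)
    qed
    have "emeasure (distr M M (Psi N a)) (Pi\<^sub>E {..<N} A) = emeasure M X"
      unfolding X_def using PA by (intro emeasure_distr) (auto simp: M_def aN)
    also have "\<dots> = (\<integral>\<^sup>+ x. indicator X x \<partial>M)" using Xs by simp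
    also have "\<dots> = (\<integral>\<^sup>+ y. \<integral>\<^sup>+ x. indicator X (x(a := y)) \<partial>PiM I' (\<lambda>_. Uu) \<partial>Uu)"
    proof -
      have Xs': "X \<in> sets (PiM (insert a I') (\<lambda>_. Uu))" using Xs unfolding M_def NI(1) .
      have "indicator X \<in> borel_measurable (PiM (insert a I') (\<lambda>_. Uu))"
        using Xs' by (rule borel_measurable_indicator)
      from product_nn_integral_insert_rev[OF NI(3) NI(2) this]
      show ?thesis unfolding M_def NI(1) .
    qed
    also have "\<dots> = (\<integral>\<^sup>+ y. indicator (A a) y * emeasure (PiM I' (\<lambda>_. Uu)) (Pi\<^sub>E I' (By y)) \<partial>Uu)"
    proof (rule nn_integral_cong)
      fix y
      have "(\<integral>\<^sup>+ x. indicator X (x(a := y)) \<partial>PiM I' (\<lambda>_. Uu))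
          = (\<integral>\<^sup>+ x. indicator (A a) y * indicator (Pi\<^sub>E I' (By y)) x \<partial>PiM I' (\<lambda>_. Uu))"
        by (rule nn_integral_cong) (simp add: ind)
      also have "\<dots> = indicator (A a) y * emeasure (PiM I' (\<lambda>_. Uu)) (Pi\<^sub>E I' (By y))"
        using Bys NI by (subst nn_integral_cmult) (auto intro!: sets_PiM_I_finite)
      finally show "(\<integral>\<^sup>+ x. indicator X (x(a := y)) \<partial>PiM I' (\<lambda>_. Uu)) = indicator (A a) y * emeasure (PiM I' (\<lambda>_. Uu)) (Pi\<^sub>E I' (By y))" .
    qed
    also have "\<dots> = (\<integral>\<^sup>+ y. indicator (A a) y * (\<Prod>c\<in>I'. emeasure Uu (A c)) \<partial>Uu)"
    proof (rule nn_integral_cong)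
      fix y
      have "emeasure (PiM I' (\<lambda>_. Uu)) (Pi\<^sub>E I' (By y)) = (\<Prod>c\<in>I'. emeasure Uu (By y c))"
        using Bys NI by (intro emeasure_PiM) auto
      also have "\<dots> = (\<Prod>c\<in>I'. emeasure Uu (A c))"
        using A by (intro prod.cong refl) (auto simp: By_def rot_emeasure I'_def)
      finally show "indicator (A a) y * emeasure (PiM I' (\<lambda>_. Uu)) (Pi\<^sub>E I' (By y)) = indicator (A a) y * (\<Prod>c\<in>I'. emeasure Uu (A c))"
        by simp
    qed
    also have "\<dots> = emeasure Uu (A a) * (\<Prod>c\<in>I'. emeasure Uu (A c))"
      using A aN by (subst nn_integral_multc) auto
    also have "\<dots> = (\<Prod>c\<in>{..<N}. emeasure Uu (A c))"
      unfolding NI(1) using NI by simp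
    finally show "emeasure (distr (PiM {..<N} (\<lambda>_. Uu)) (PiM {..<N} (\<lambda>_. Uu)) (Psi N a)) (Pi\<^sub>E {..<N} A) = (\<Prod>i\<in>{..<N}. emeasure Uu (A i))"
      unfolding M_def .
  qed
qed

definition Wf :: "real \<Rightarrow> real \<Rightarrow> real" where
  "Wf ell u = - Zf ell u"

definition Iset :: "real \<Rightarrow> real set" where
  "Iset ell = frac -` {min (1/2) (ell + 1/2) <.. max (1/2) (ell + 1/2)}"

definition mu :: "real \<Rightarrow> real measure" where
  "mu ell = distr Uu borel (Wf ell)"

lemma Wf_measurable[measurable]: "Wf ell \<in> borel_measurable borel"
proof -
  have "(\<lambda>u. - (srep (ell - frac u) - srep (- frac u))) \<in> borel_measurable borel" by measurable
  then show ?thesis by (simp add: Wf_def[abs_def] Zf_def)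
qed

lemma Iset_sets[measurable]: "Iset ell \<in> sets borel"
proof -
  have "frac -` {min (1/2) (ell + 1/2) <.. max (1/2) (ell + 1/2)} \<inter> space borel \<in> sets borel"
    by (rule measurable_sets[OF frac_measurable]) simp
  then show ?thesis by (simp add: Iset_def)
qed

lemma srep_val:
  assumes "\<bar>ell\<bar> < 1/2" "0 \<le> v" "v < 1"
  shows "srep (ell - v) = ell - v + (if v > ell + 1/2 then 1 else 0)"
proof (cases "v > ell + 1/2")
  case True
  have "srep (ell - v) = srep (ell - v + 1)" by (rule srep_eqI[where k = "-1"]) simp
  also have "\<dots> = ell - v + 1" using assms True by (intro srep_small) auto
  finally show ?thesis using True by simp
next
  case False
  then show ?thesis using assms by (simp add: srep_small)
qed

lemma Wf_formula:
  assumes l: "0 < \<bar>ell\<bar>" "\<bar>ell\<bar> < 1/2"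
  shows "Wf ell u = - ell + sgn ell * indicator (Iset ell) u"
proof -
  define v where "v = frac u"
  have v: "0 \<le> v" "v < 1" by (auto simp: v_def frac_lt_1)
  have s1: "srep (ell - v) = ell - v + (if v > ell + 1/2 then 1 else 0)" by (rule srep_val[OF l(2) v])
  have s2: "srep (- v) = - v + (if v > 1/2 then 1 else 0)" using srep_val[of 0 v] v by simp
  have W: "Wf ell u = - ell - (if v > ell + 1/2 then 1 else 0) + (if v > 1/2 then 1 else 0)"
    by (simp add: Wf_def Zf_def v_def[symmetric] s1 s2)
  show ?thesis
  proof (cases "ell > 0")
    case True
    then show ?thesis unfolding W by (auto simp: Iset_def v_def[symmetric] indicator_def)
  next
    case False
    then have "ell < 0" using l by auto
    then show ?thesis unfolding W by (auto simp: Iset_def v_def[symmetric] indicator_def)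
  qed
qed

lemma measure_Iset:
  assumes l: "0 < \<bar>ell\<bar>" "\<bar>ell\<bar> < 1/2"
  shows "measure Uu (Iset ell) = \<bar>ell\<bar>"
proof -
  define lo where "lo = min (1/2) (ell + 1/2)"
  define hi where "hi = max (1/2) (ell + 1/2)"
  have lh: "0 \<le> lo" "lo \<le> hi" "hi < 1" "hi - lo = \<bar>ell\<bar>" using l by (auto simp: lo_def hi_def)
  have eq: "{0..<1} \<inter> Iset ell = {lo<..hi}"
    using lh by (auto simp: Iset_def lo_def[symmetric] hi_def[symmetric] frac_small)
  have "measure Uu (Iset ell) = measure lborel ({0..<1} \<inter> Iset ell) / measure lborel {0..<1::real}"
    unfolding Uu_def by (rule measure_uniform_measure) auto
  also have "\<dots> = \<bar>ell\<bar>" using lh by (simp add: eq)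
  finally show ?thesis .
qed

lemma mu_prob: "prob_space (mu ell)"
  unfolding mu_def by (intro prob_space.prob_space_distr Uu_prob) simp

lemma sets_mu[simp, measurable_cong]: "sets (mu ell) = sets borel"
  by (simp add: mu_def)

lemma mu_integral:
  fixes f :: "real \<Rightarrow> real"
  assumes l: "0 < \<bar>ell\<bar>" "\<bar>ell\<bar> < 1/2" and f[measurable]: "f \<in> borel_measurable borel"
  shows "integrable (mu ell) f \<and> integral\<^sup>L (mu ell) f = f (- ell) + \<bar>ell\<bar> * (f (sgn ell - ell) - f (- ell))"
proof -
  interpret prob_space Uu by (rule Uu_prob)
  have fw: "f (Wf ell u) = f (- ell) + indicator (Iset ell) u * (f (sgn ell - ell) - f (- ell))" for u
    by (simp add: Wf_formula[OF l] indicator_def)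
  have i1: "integrable Uu (\<lambda>u. f (- ell))" by simp
  have "emeasure Uu (Iset ell) < \<infinity>" by (simp add: less_top[symmetric])
  then have "integrable Uu (indicator (Iset ell) :: real \<Rightarrow> real)"
    by (intro integrable_real_indicator) auto
  then have i2: "integrable Uu (\<lambda>u. indicator (Iset ell) u * (f (sgn ell - ell) - f (- ell)))" by simp
  have int: "integrable Uu (\<lambda>u. f (- ell) + indicator (Iset ell) u * (f (sgn ell - ell) - f (- ell)))"
    by (rule Bochner_Integration.integrable_add[OF i1 i2])
  have "integrable (mu ell) f \<longleftrightarrow> integrable Uu (\<lambda>u. f (Wf ell u))"
    unfolding mu_def by (rule integrable_distr_eq) measurable
  then have i: "integrable (mu ell) f" using int by (simp add: fw)
  have "integral\<^sup>L (mu ell) f = integral\<^sup>L Uu (\<lambda>u. f (Wf ell u))"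
    unfolding mu_def by (rule integral_distr) measurable
  also have "\<dots> = integral\<^sup>L Uu (\<lambda>u. f (- ell) + indicator (Iset ell) u * (f (sgn ell - ell) - f (- ell)))"
    by (simp add: fw)
  also have "\<dots> = f (- ell) + measure Uu (Iset ell) * (f (sgn ell - ell) - f (- ell))"
    by (subst Bochner_Integration.integral_add[OF i1 i2]) (simp add: prob_space[unfolded space_Uu])
  also have "\<dots> = f (- ell) + \<bar>ell\<bar> * (f (sgn ell - ell) - f (- ell))"
    by (simp add: measure_Iset[OF l])
  finally show ?thesis using i by simp
qed

lemma mu_moments:
  assumes l: "0 < \<bar>ell\<bar>" "\<bar>ell\<bar> < 1/2"
  shows "integrable (mu ell) (\<lambda>t. t)" "integral\<^sup>L (mu ell) (\<lambda>t. t) = 0"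
    "integrable (mu ell) (\<lambda>t. t\<^sup>2)" "integral\<^sup>L (mu ell) (\<lambda>t. t\<^sup>2) = \<bar>ell\<bar> - ell\<^sup>2"
    "integrable (mu ell) (\<lambda>t. \<bar>t\<bar> ^ 3)"
    "integral\<^sup>L (mu ell) (\<lambda>t. \<bar>t\<bar> ^ 3) = (\<bar>ell\<bar> - ell\<^sup>2) * (ell\<^sup>2 + (1 - \<bar>ell\<bar>)\<^sup>2)"
proof -
  note m1 = mu_integral[OF l, of "\<lambda>t. t"]
  note m2 = mu_integral[OF l, of "\<lambda>t. t\<^sup>2"]
  note m3 = mu_integral[OF l, of "\<lambda>t. \<bar>t\<bar> ^ 3"]
  show "integrable (mu ell) (\<lambda>t. t)" "integrable (mu ell) (\<lambda>t. t\<^sup>2)" "integrable (mu ell) (\<lambda>t. \<bar>t\<bar> ^ 3)"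
    using m1 m2 m3 by auto
  show "integral\<^sup>L (mu ell) (\<lambda>t. t) = 0"
    using m1 by (simp add: algebra_simps abs_mult_sgn)
  have "ell > 0 \<or> ell < 0" using l by auto
  then show "integral\<^sup>L (mu ell) (\<lambda>t. t\<^sup>2) = \<bar>ell\<bar> - ell\<^sup>2"
    using m2 by (auto simp: power2_eq_square algebra_simps)
  have "ell > 0 \<or> ell < 0" using l by auto
  then show "integral\<^sup>L (mu ell) (\<lambda>t. \<bar>t\<bar> ^ 3) = (\<bar>ell\<bar> - ell\<^sup>2) * (ell\<^sup>2 + (1 - \<bar>ell\<bar>)\<^sup>2)"
  proof
    assume "ell > 0"
    moreover have "\<bar>1 - ell\<bar> = 1 - ell" using l by auto
    ultimately show ?thesis using m3 by (simp add: power2_eq_square power3_eq_cube algebra_simps)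
  next
    assume n: "ell < 0"
    moreover have "\<bar>- 1 - ell\<bar> = 1 + ell" using l n by auto
    ultimately show ?thesis using m3 by (simp add: power2_eq_square power3_eq_cube algebra_simps)
  qed
qed

lemma PiM_comp:
  fixes f :: "real \<Rightarrow> real" and n i :: nat
  assumes i: "i < n" and f[measurable]: "f \<in> borel_measurable borel" and fi: "integrable (mu ell) f"
  shows "integrable (PiM {..<n} (\<lambda>_. mu ell)) (\<lambda>\<omega>. f (\<omega> i))"
    "integral\<^sup>L (PiM {..<n} (\<lambda>_. mu ell)) (\<lambda>\<omega>. f (\<omega> i)) = integral\<^sup>L (mu ell) f"
proof -
  have d: "distr (PiM {..<n} (\<lambda>_. mu ell)) (mu ell) (\<lambda>\<omega>. \<omega> i) = mu ell"
    using i by (intro distr_PiM_component mu_prob) auto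
  have m: "(\<lambda>\<omega>. \<omega> i) \<in> measurable (PiM {..<n} (\<lambda>_. mu ell)) (mu ell)"
    using i by (intro measurable_component_singleton) auto
  have fm: "f \<in> borel_measurable (mu ell)" by simp
  show "integrable (PiM {..<n} (\<lambda>_. mu ell)) (\<lambda>\<omega>. f (\<omega> i))"
    using integrable_distr_eq[OF m fm] fi d by simp
  show "integral\<^sup>L (PiM {..<n} (\<lambda>_. mu ell)) (\<lambda>\<omega>. f (\<omega> i)) = integral\<^sup>L (mu ell) f"
    using integral_distr[OF m fm] d by simp
qed

lemma PiM_cross:
  fixes n i j :: nat
  assumes l: "0 < \<bar>ell\<bar>" "\<bar>ell\<bar> < 1/2" and ij: "i < n" "j < n" "i \<noteq> j"
  shows "integrable (PiM {..<n} (\<lambda>_. mu ell)) (\<lambda>\<omega>. \<omega> i * \<omega> j)"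
    "integral\<^sup>L (PiM {..<n} (\<lambda>_. mu ell)) (\<lambda>\<omega>. \<omega> i * \<omega> j) = 0"
proof -
  interpret product_prob_space "\<lambda>_::nat. mu ell" by (rule product_prob_spaceI) (rule mu_prob)
  define F where "F k = (\<lambda>t::real. if k \<in> {i, j} then t else 1)" for k
  have Fi: "integrable (mu ell) (F k)" for k
  proof (cases "k \<in> {i, j}")
    case True then show ?thesis using mu_moments(1)[OF l] by (simp add: F_def)
  next
    case False
    have "integrable (mu ell) (\<lambda>t. 1::real)"
      using mu_prob[of ell] by (intro finite_measure.integrable_const prob_space.finite_measure)
    then show ?thesis using False by (simp add: F_def)
  qed
  have pe: "(\<Prod>k\<in>{..<n}. F k (\<omega> k)) = \<omega> i * \<omega> j" for \<omega>
  proof -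
    have "(\<Prod>k\<in>{..<n}. F k (\<omega> k)) = (\<Prod>k\<in>{..<n}. if k \<in> {i, j} then \<omega> k else 1)"
      by (simp add: F_def)
    also have "\<dots> = (\<Prod>k\<in>{..<n} \<inter> {i, j}. \<omega> k)" by (rule prod.inter_restrict[symmetric]) simp
    also have "{..<n} \<inter> {i, j} = {i, j}" using ij by auto
    finally show ?thesis using ij by simp
  qed
  have "integrable (PiM {..<n} (\<lambda>_. mu ell)) (\<lambda>\<omega>. \<Prod>k\<in>{..<n}. F k (\<omega> k))"
    by (rule product_integrable_prod) (auto intro: Fi)
  then show "integrable (PiM {..<n} (\<lambda>_. mu ell)) (\<lambda>\<omega>. \<omega> i * \<omega> j)" by (simp add: pe)
  have "integral\<^sup>L (PiM {..<n} (\<lambda>_. mu ell)) (\<lambda>\<omega>. \<Prod>k\<in>{..<n}. F k (\<omega> k)) = (\<Prod>k\<in>{..<n}. integral\<^sup>L (mu ell) (F k))"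
    by (rule product_integral_prod) (auto intro: Fi)
  also have "\<dots> = 0"
  proof (rule prod_zero)
    show "\<exists>k\<in>{..<n}. integral\<^sup>L (mu ell) (F k) = 0"
      using ij mu_moments(2)[OF l] by (intro bexI[of _ i]) (auto simp: F_def)
  qed simp
  finally show "integral\<^sup>L (PiM {..<n} (\<lambda>_. mu ell)) (\<lambda>\<omega>. \<omega> i * \<omega> j) = 0" by (simp add: pe)
qed

lemma S_moments:
  fixes n :: nat
  assumes l: "0 < \<bar>ell\<bar>" "\<bar>ell\<bar> < 1/2"
  shows "integrable (PiM {..<n} (\<lambda>_. mu ell)) (\<lambda>\<omega>. \<Sum>i<n. \<omega> i)"
    "integral\<^sup>L (PiM {..<n} (\<lambda>_. mu ell)) (\<lambda>\<omega>. \<Sum>i<n. \<omega> i) = 0"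
    "integrable (PiM {..<n} (\<lambda>_. mu ell)) (\<lambda>\<omega>. (\<Sum>i<n. \<omega> i)\<^sup>2)"
    "integral\<^sup>L (PiM {..<n} (\<lambda>_. mu ell)) (\<lambda>\<omega>. (\<Sum>i<n. \<omega> i)\<^sup>2) = real n * (\<bar>ell\<bar> - ell\<^sup>2)"
proof -
  let ?P = "PiM {..<n} (\<lambda>_. mu ell)"
  have c1: "integrable ?P (\<lambda>\<omega>. \<omega> i)" "integral\<^sup>L ?P (\<lambda>\<omega>. \<omega> i) = 0" if "i < n" for i
    using PiM_comp[OF that measurable_ident_sets[OF refl] mu_moments(1)[OF l]] mu_moments(2)[OF l] by simp_all
  have c2: "integrable ?P (\<lambda>\<omega>. \<omega> i * \<omega> j) \<and> integral\<^sup>L ?P (\<lambda>\<omega>. \<omega> i * \<omega> j) = (if i = j then \<bar>ell\<bar> - ell\<^sup>2 else 0)"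
    if "i < n" "j < n" for i j
  proof (cases "i = j")
    case True
    have sqm: "(\<lambda>t::real. t\<^sup>2) \<in> borel_measurable borel" by measurable
    note pc = PiM_comp[OF that(1) sqm mu_moments(3)[OF l]]
    have e: "(\<lambda>\<omega>::nat \<Rightarrow> real. \<omega> i * \<omega> j) = (\<lambda>\<omega>. (\<omega> i)\<^sup>2)" using True by (simp add: fun_eq_iff power2_eq_square)
    show ?thesis unfolding e using pc mu_moments(4)[OF l] True by simp
  next
    case False
    then show ?thesis using PiM_cross[OF l that False] by simp
  qed
  show "integrable ?P (\<lambda>\<omega>. \<Sum>i<n. \<omega> i)"
    using c1 by (intro Bochner_Integration.integrable_sum) auto
  show "integral\<^sup>L ?P (\<lambda>\<omega>. \<Sum>i<n. \<omega> i) = 0"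
    using c1 by (subst Bochner_Integration.integral_sum) auto
  have sq: "(\<Sum>i<n. \<omega> i)\<^sup>2 = (\<Sum>i<n. \<Sum>j<n. \<omega> i * \<omega> j)" for \<omega> :: "nat \<Rightarrow> real"
    by (simp add: power2_eq_square sum_product)
  have ii: "integrable ?P (\<lambda>\<omega>. \<Sum>j<n. \<omega> i * \<omega> j)" if "i < n" for i
    using c2 that by (intro Bochner_Integration.integrable_sum) auto
  show "integrable ?P (\<lambda>\<omega>. (\<Sum>i<n. \<omega> i)\<^sup>2)"
    unfolding sq by (rule Bochner_Integration.integrable_sum) (rule ii, simp)
  have "integral\<^sup>L ?P (\<lambda>\<omega>. (\<Sum>i<n. \<omega> i)\<^sup>2) = (\<Sum>i<n. integral\<^sup>L ?P (\<lambda>\<omega>. \<Sum>j<n. \<omega> i * \<omega> j))"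
    unfolding sq using ii by (subst Bochner_Integration.integral_sum) auto
  also have "\<dots> = (\<Sum>i<n. \<Sum>j<n. (if i = j then \<bar>ell\<bar> - ell\<^sup>2 else 0))"
  proof (rule sum.cong[OF refl])
    fix i assume i: "i \<in> {..<n}"
    then show "integral\<^sup>L ?P (\<lambda>\<omega>. \<Sum>j<n. \<omega> i * \<omega> j) = (\<Sum>j<n. (if i = j then \<bar>ell\<bar> - ell\<^sup>2 else 0))"
      using c2 by (subst Bochner_Integration.integral_sum) auto
  qed
  also have "\<dots> = real n * (\<bar>ell\<bar> - ell\<^sup>2)" by simp
  finally show "integral\<^sup>L ?P (\<lambda>\<omega>. (\<Sum>i<n. \<omega> i)\<^sup>2) = real n * (\<bar>ell\<bar> - ell\<^sup>2)" .
qed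

lemma Wf_meas_mu: "Wf ell \<in> measurable Uu (mu ell)"
  by (simp add: measurable_cong_sets[OF sets_Uu sets_mu])

lemma Phi_distr:
  fixes a N n :: nat and e :: "nat \<Rightarrow> nat"
  assumes aN: "a < N" and e: "inj_on e {..<n}" "e \<in> {..<n} \<rightarrow> {..<N}"
  shows "distr (PiM {..<N} (\<lambda>_. Uu)) (PiM {..<n} (\<lambda>_. mu ell)) (\<lambda>x. \<lambda>i\<in>{..<n}. Wf ell (Psi N a x (e i)))
       = PiM {..<n} (\<lambda>_. mu ell)"
proof -
  define MN where "MN = PiM {..<N} (\<lambda>_::nat. Uu)"
  define QN where "QN = PiM {..<N} (\<lambda>_::nat. mu ell)"
  define P where "P = PiM {..<n} (\<lambda>_::nat. mu ell)"
  define c where "c = compose {..<N} (Wf ell)"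
  define g where "g = (\<lambda>\<omega>::nat \<Rightarrow> real. \<lambda>i\<in>{..<n}. \<omega> (e i))"
  have cm: "c \<in> measurable MN QN"
    unfolding c_def MN_def QN_def compose_def
  proof (rule measurable_restrict)
    fix i assume "i \<in> {..<N}"
    then have "(\<lambda>x. x i) \<in> measurable (PiM {..<N} (\<lambda>_::nat. Uu)) Uu" by (rule measurable_component_singleton)
    then show "(\<lambda>x. Wf ell (x i)) \<in> measurable (PiM {..<N} (\<lambda>_::nat. Uu)) (mu ell)"
      by (rule measurable_compose) (rule Wf_meas_mu)
  qed
  have gm: "g \<in> measurable QN P"
    unfolding g_def QN_def P_def
    by (rule measurable_restrict, rule measurable_component_singleton) (use e in auto)
  have pm: "Psi N a \<in> measurable MN MN" unfolding MN_def by (rule Psi_measurable[OF aN])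
  have d1: "distr MN QN c = QN"
  proof -
    have "distr MN QN c = PiM {..<N} (\<lambda>i. distr Uu (mu ell) (Wf ell))"
      unfolding MN_def QN_def c_def
      by (rule distr_PiM_finite_prob_space') (auto intro: Uu_prob mu_prob Wf_meas_mu)
    also have "(\<lambda>i::nat. distr Uu (mu ell) (Wf ell)) = (\<lambda>_. mu ell)"
      by (auto simp: mu_def fun_eq_iff intro!: distr_cong)
    finally show ?thesis unfolding QN_def .
  qed
  have d2: "distr QN P g = P"
    unfolding QN_def P_def g_def using distr_PiM_reindex[of "{..<N}" "\<lambda>_. mu ell" e "{..<n}"] e mu_prob
    by simp
  have sh: "distr MN MN (Psi N a) = MN" unfolding MN_def by (rule shear[OF aN])
  have "distr MN P (g \<circ> c \<circ> Psi N a) = distr (distr MN MN (Psi N a)) P (g \<circ> c)"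
    using gm cm pm by (subst distr_distr) (auto intro: measurable_comp)
  also have "\<dots> = distr MN P (g \<circ> c)" by (simp add: sh)
  also have "\<dots> = distr (distr MN QN c) P g" using gm cm by (subst distr_distr) auto
  also have "\<dots> = P" by (simp add: d1 d2)
  finally have *: "distr MN P (g \<circ> c \<circ> Psi N a) = P" .
  have eq: "g (c (Psi N a x)) = (\<lambda>i\<in>{..<n}. Wf ell (Psi N a x (e i)))" for x
    using e by (auto simp: g_def c_def compose_def fun_eq_iff Pi_iff)
  have "distr MN P (\<lambda>x. \<lambda>i\<in>{..<n}. Wf ell (Psi N a x (e i))) = distr MN P (g \<circ> c \<circ> Psi N a)"
    by (rule distr_cong) (simp_all add: eq)
  with * show ?thesis unfolding MN_def P_def by simp
qed

lemma Q_AE_Uu: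
  "AE t in Uu. frac (t + 1/2) \<noteq> 0 \<and> frac (t - ell + 1/2) \<noteq> 0"
proof -
  define C where "C = range (\<lambda>k::int. of_int k - 1/2) \<union> range (\<lambda>k::int. of_int k + ell - 1/2)"
  have "countable C" by (simp add: C_def)
  then have Cn: "C \<in> null_sets lborel" by (rule countable_imp_null_set_lborel)
  have "AE t in lborel. frac (t + 1/2) \<noteq> 0 \<and> frac (t - ell + 1/2) \<noteq> 0"
  proof (rule AE_I'[OF Cn], rule subsetI)
    fix t assume "t \<in> {t \<in> space lborel. \<not> (frac (t + 1/2) \<noteq> 0 \<and> frac (t - ell + 1/2) \<noteq> 0)}"
    then have "t + 1/2 \<in> \<int> \<or> t - ell + 1/2 \<in> \<int>" by (auto simp: frac_eq_0_iff)
    then show "t \<in> C"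
    proof
      assume "t + 1/2 \<in> \<int>"
      then obtain k where "t + 1/2 = of_int k" by (auto elim: Ints_cases)
      then have "t = of_int k - 1/2" by simp
      then show ?thesis by (auto simp: C_def)
    next
      assume "t - ell + 1/2 \<in> \<int>"
      then obtain k where "t - ell + 1/2 = of_int k" by (auto elim: Ints_cases)
      then have "t = of_int k + ell - 1/2" by simp
      then show ?thesis unfolding C_def by blast
    qed
  qed
  then show ?thesis unfolding Uu_def by (intro AE_uniform_measureI) (auto elim: AE_mp)
qed

lemma good_AE:
  fixes a N :: nat and J :: "nat set"
  assumes aN: "a < N" and J: "J \<subseteq> {..<N} - {a}"
  shows "AE x in PiM {..<N} (\<lambda>_. Uu). \<forall>c\<in>J. frac (frac (x c - x a) + 1/2) \<noteq> 0 \<and> frac (frac (x c - x a) - ell + 1/2) \<noteq> 0"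
proof -
  define MN where "MN = PiM {..<N} (\<lambda>_::nat. Uu)"
  define Q where "Q t = (frac (t + 1/2) \<noteq> 0 \<and> frac (t - ell + 1/2) \<noteq> 0)" for t
  have Qm: "{t \<in> space Uu. Q t} \<in> sets Uu"
  proof -
    have "(\<lambda>t::real. frac (t + 1/2)) \<in> borel_measurable borel" "(\<lambda>t::real. frac (t - ell + 1/2)) \<in> borel_measurable borel"
      by measurable
    then have "Measurable.pred borel Q" unfolding Q_def by measurable
    then show ?thesis by (simp add: pred_def)
  qed
  have fJ: "finite J" using J finite_subset by (metis finite_Diff finite_lessThan)
  have c1: "AE y in MN. Q (y c)" if c: "c \<in> J" for c
  proof -
    have d: "distr MN Uu (\<lambda>y. y c) = Uu"
      unfolding MN_def using c J by (intro distr_PiM_component Uu_prob) auto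
    have m: "(\<lambda>y. y c) \<in> measurable MN Uu"
      unfolding MN_def using c J by (intro measurable_component_singleton) auto
    have "AE t in Uu. Q t" using Q_AE_Uu[of ell] by (simp add: Q_def)
    then have "AE t in distr MN Uu (\<lambda>y. y c). Q t" unfolding d .
    then show ?thesis using AE_distr_iff[OF m Qm] by simp
  qed
  have "AE y in MN. \<forall>c\<in>J. Q (y c)" using fJ c1 by (intro AE_finite_allI) auto
  then have A: "AE y in distr MN MN (Psi N a). \<forall>c\<in>J. Q (y c)" unfolding MN_def shear[OF aN] .
  have pm: "Psi N a \<in> measurable MN MN" unfolding MN_def by (rule Psi_measurable[OF aN])
  have Pm: "{y \<in> space MN. \<forall>c\<in>J. Q (y c)} \<in> sets MN"
  proof -
    have "Measurable.pred MN (\<lambda>y. Q (y c))" if "c \<in> J" for c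
    proof -
      have m: "(\<lambda>y. y c) \<in> measurable MN Uu"
        unfolding MN_def using that J by (intro measurable_component_singleton) auto
      show ?thesis using measurable_sets[OF m Qm] by (simp add: pred_def vimage_def Collect_conj_eq Int_commute)
    qed
    then have "Measurable.pred MN (\<lambda>y. \<forall>c\<in>J. Q (y c))" using fJ by (intro pred_intros_finite) auto
    then show ?thesis by (simp add: pred_def)
  qed
  have "AE x in MN. \<forall>c\<in>J. Q (Psi N a x c)" using A AE_distr_iff[OF pm Pm] by simp
  then show ?thesis unfolding MN_def[symmetric]
  proof (rule AE_mp, intro AE_I2 impI ballI)
    fix x c assume h: "\<forall>c\<in>J. Q (Psi N a x c)" "c \<in> J"
    have pe: "Psi N a x c = frac (x c - x a)" using \<open>c \<in> J\<close> J by (auto simp: Psi_def)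
    from h have "Q (Psi N a x c)" by blast
    then show "frac (frac (x c - x a) + 1/2) \<noteq> 0 \<and> frac (frac (x c - x a) - ell + 1/2) \<noteq> 0"
      unfolding Q_def pe .
  qed
qed

lemma comp_meas[measurable]: "(\<lambda>x. x c) \<in> borel_measurable (PiM {..<N} (\<lambda>_::nat. Uu))"
proof (cases "c < N")
  case True
  then have "(\<lambda>x. x c) \<in> measurable (PiM {..<N} (\<lambda>_::nat. Uu)) Uu"
    by (intro measurable_component_singleton) auto
  then show ?thesis by (simp add: measurable_cong_sets[OF refl sets_Uu])
next
  case False
  have "(\<lambda>x. undefined::real) \<in> borel_measurable (PiM {..<N} (\<lambda>_::nat. Uu))" by simp
  moreover have "\<And>x. x \<in> space (PiM {..<N} (\<lambda>_::nat. Uu)) \<Longrightarrow> undefined = x c"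
    using False by (auto simp: space_PiM PiE_def extensional_def)
  ultimately show ?thesis by (rule measurable_cong[THEN iffD1, rotated])
qed

theorem mainTheorem8:
  fixes N a b :: nat and ell C :: real
    and T :: "(nat \<times> nat) set" and Cm :: "nat \<times> nat \<Rightarrow> nat \<times> nat \<Rightarrow> real"
  assumes "N \<ge> 3"
    and "(a, b) \<in> springs N"
    and "0 < \<bar>ell\<bar>" and "\<bar>ell\<bar> < 1/2"
    and "berry_esseen_const C"
    and "spanning_tree N T" and "fund_cycle_matrix N T Cm"
  shows "let M = node_law N;
             D = (\<lambda>x. delta_len N T Cm (cond_config a b ell x) (a, b));
             \<mu> = integral\<^sup>L M D;
             V = integral\<^sup>L M (\<lambda>x. (D x - \<mu>)\<^sup>2);
             F = (\<lambda>y. measure M {x \<in> space M. (D x - \<mu>) / sqrt V \<le> y})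
         in \<forall>y. \<bar>F y - std_normal_cdf y\<bar>
               \<le> C / sqrt (real N - 2) * ((ell\<^sup>2 + (1 - \<bar>ell\<bar>)\<^sup>2) / sqrt (\<bar>ell\<bar> - ell\<^sup>2))"
proof -
  note N3 = assms(1) and l = assms(3,4) and BE = assms(5) and st = assms(6) and fc = assms(7)
  have ab: "a < b" "b < N" using assms(2) by (auto simp: springs_def)
  have aN: "a < N" using ab by simp
  define n where "n = N - 2"
  define J where "J = {..<N} - {a, b}"
  have cJ: "card J = n" using ab by (simp add: J_def n_def card_Diff_subset)
  have fJ: "finite J" by (simp add: J_def)
  have Jsub: "J \<subseteq> {..<N} - {a}" by (auto simp: J_def)
  obtain e where e0: "bij_betw e {0..<card J} J" using ex_bij_betw_nat_finite[OF fJ] by blast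
  have e: "bij_betw e {..<n} J" using e0 cJ by (simp add: atLeast0LessThan)
  have einj: "inj_on e {..<n}" and eJ: "\<And>i. i < n \<Longrightarrow> e i \<in> J" using e by (auto simp: bij_betw_def)
  have eN: "e \<in> {..<n} \<rightarrow> {..<N}" using eJ by (auto simp: J_def)
  define MN where "MN = PiM {..<N} (\<lambda>_::nat. Uu)"
  define P where "P = PiM {..<n} (\<lambda>_::nat. mu ell)"
  define Phi where "Phi x = (\<lambda>i\<in>{..<n}. Wf ell (Psi N a x (e i)))" for x
  define D where "D x = delta_len N T Cm (cond_config a b ell x) (a, b)" for x
  define H where "H \<omega> = ((\<Sum>i<n. \<omega> i) - 2 * ell) / real N" for \<omega> :: "nat \<Rightarrow> real"
  define s where "s = \<bar>ell\<bar> - ell\<^sup>2"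
  define \<sigma> where "\<sigma> = sqrt s"
  have s0: "s > 0"
  proof -
    have "s = \<bar>ell\<bar> * (1 - \<bar>ell\<bar>)" unfolding s_def by (simp add: power2_eq_square algebra_simps)
    also have "\<dots> > 0" using l by (intro mult_pos_pos) auto
    finally show ?thesis .
  qed
  have \<sigma>0: "\<sigma> > 0" using s0 by (simp add: \<sigma>_def)
  have n1: "n \<ge> 1" using N3 by (simp add: n_def)
  have N0: "real N > 0" using N3 by simp
  have PhiD: "distr MN P Phi = P"
    unfolding MN_def P_def Phi_def by (rule Phi_distr[OF aN einj eN])
  have Phim: "Phi \<in> measurable MN P"
    unfolding Phi_def MN_def P_def
  proof (rule measurable_restrict)
    fix i assume i: "i \<in> {..<n}"
    have "(\<lambda>x. Psi N a x (e i)) \<in> measurable (PiM {..<N} (\<lambda>_::nat. Uu)) Uu"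
      by (rule measurable_compose[OF Psi_measurable[OF aN] measurable_component_singleton]) (use eN i in auto)
    then show "(\<lambda>x. Wf ell (Psi N a x (e i))) \<in> measurable (PiM {..<N} (\<lambda>_::nat. Uu)) (mu ell)"
      by (rule measurable_compose) (rule Wf_meas_mu)
  qed
  have Hm[measurable]: "H \<in> borel_measurable P"
  proof -
    have "(\<lambda>\<omega>. \<omega> i) \<in> borel_measurable P" if "i < n" for i
      unfolding P_def using measurable_component_singleton[of i "{..<n}" "\<lambda>_. mu ell"] that
      by (simp add: measurable_cong_sets[OF refl sets_mu])
    then show ?thesis unfolding H_def
      by (intro borel_measurable_divide borel_measurable_diff borel_measurable_sum) auto
  qed
  define Dm where "Dm x = - (2 * ell + (\<Sum>c\<in>J. (if c < b then srep (frac (x a + ell) - x c) else - srep (x c - frac (x a + ell)))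
      - (if c < a then srep (x a - x c) else - srep (x c - x a)))) / real N" for x :: "nat \<Rightarrow> real"
  have DDm: "D x = Dm x" for x
  proof -
    have "D x = - (2 * ell + (\<Sum>c\<in>J. tt (cond_config a b ell x) b c - tt (cond_config a b ell x) a c)) / real N"
      unfolding D_def J_def by (rule D_formula[OF st fc ab l(2)])
    also have "(\<Sum>c\<in>J. tt (cond_config a b ell x) b c - tt (cond_config a b ell x) a c)
      = (\<Sum>c\<in>J. (if c < b then srep (frac (x a + ell) - x c) else - srep (x c - frac (x a + ell)))
      - (if c < a then srep (x a - x c) else - srep (x c - x a)))"
      by (rule sum.cong[OF refl]) (use ab in \<open>auto simp: J_def tt_def cond_config_def\<close>)
    finally show ?thesis by (simp add: Dm_def)
  qed
  have Dm_m: "Dm \<in> borel_measurable MN" unfolding Dm_def MN_def by measurable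
  have Dm_eq: "Dm = D" using DDm by (simp add: fun_eq_iff)
  have Dmeas[measurable]: "D \<in> borel_measurable MN" using Dm_m by (simp add: Dm_eq)
  have HPm: "(\<lambda>x. H (Phi x)) \<in> borel_measurable MN" using Hm Phim by measurable
  have AEq: "AE x in MN. D x = H (Phi x)"
    using good_AE[OF aN Jsub, of ell] unfolding MN_def[symmetric]
  proof (rule AE_mp, intro AE_I2 impI)
    fix x assume g: "\<forall>c\<in>J. frac (frac (x c - x a) + 1/2) \<noteq> 0 \<and> frac (frac (x c - x a) - ell + 1/2) \<noteq> 0"
    have "D x = - (2 * ell + (\<Sum>c\<in>J. tt (cond_config a b ell x) b c - tt (cond_config a b ell x) a c)) / real N"
      unfolding D_def J_def by (rule D_formula[OF st fc ab l(2)])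
    also have "(\<Sum>c\<in>J. tt (cond_config a b ell x) b c - tt (cond_config a b ell x) a c)
        = (\<Sum>c\<in>J. - Wf ell (frac (x c - x a)))"
    proof (rule sum.cong[OF refl])
      fix c assume c: "c \<in> J"
      then have "c \<noteq> a" "c \<noteq> b" by (auto simp: J_def)
      then show "tt (cond_config a b ell x) b c - tt (cond_config a b ell x) a c = - Wf ell (frac (x c - x a))"
        using Z_exact[OF ab(1)] g c by (simp add: Wf_def)
    qed
    also have "(\<Sum>c\<in>J. - Wf ell (frac (x c - x a))) = (\<Sum>i<n. - Wf ell (frac (x (e i) - x a)))"
      using sum.reindex_bij_betw[OF e, of "\<lambda>c. - Wf ell (frac (x c - x a))"] by simp
    also have "\<dots> = - (\<Sum>i<n. Phi x i)"
    proof -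
      have "Phi x i = Wf ell (frac (x (e i) - x a))" if "i < n" for i
        using that eJ[OF that] by (auto simp: Phi_def Psi_def J_def)
      then show ?thesis by (simp add: sum_negf)
    qed
    finally show "D x = H (Phi x)" by (simp add: H_def)
  qed
  note SM = S_moments[OF l, of n]
  have intH: "integral\<^sup>L P H = - 2 * ell / real N"
  proof -
    interpret prob_space P unfolding P_def by (intro prob_space_PiM mu_prob)
    have "integral\<^sup>L P H = integral\<^sup>L P (\<lambda>\<omega>. (\<Sum>i<n. \<omega> i) - 2 * ell) / real N"
      unfolding H_def by (rule integral_divide_zero)
    also have "integral\<^sup>L P (\<lambda>\<omega>. (\<Sum>i<n. \<omega> i) - 2 * ell) = integral\<^sup>L P (\<lambda>\<omega>. \<Sum>i<n. \<omega> i) - integral\<^sup>L P (\<lambda>\<omega>. 2 * ell)"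
      using SM(1)[folded P_def] by (intro Bochner_Integration.integral_diff) auto
    finally show ?thesis using SM(2)[folded P_def] by (simp add: prob_space)
  qed
  have intD: "integral\<^sup>L MN D = - 2 * ell / real N"
  proof -
    have "integral\<^sup>L MN D = integral\<^sup>L MN (\<lambda>x. H (Phi x))"
      by (rule integral_cong_AE[OF Dmeas HPm AEq])
    also have "\<dots> = integral\<^sup>L (distr MN P Phi) H" by (rule integral_distr[symmetric, OF Phim Hm])
    finally show ?thesis using intH by (simp add: PhiD)
  qed
  define \<mu>0 where "\<mu>0 = - 2 * ell / real N"
  have HS: "H \<omega> - \<mu>0 = (\<Sum>i<n. \<omega> i) / real N" for \<omega>
    by (simp add: H_def \<mu>0_def diff_divide_distrib)
  have intV: "integral\<^sup>L MN (\<lambda>x. (D x - \<mu>0)\<^sup>2) = real n * s / (real N)\<^sup>2"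
  proof -
    have m2: "(\<lambda>\<omega>. (H \<omega> - \<mu>0)\<^sup>2) \<in> borel_measurable P" by measurable
    have "integral\<^sup>L MN (\<lambda>x. (D x - \<mu>0)\<^sup>2) = integral\<^sup>L MN (\<lambda>x. (H (Phi x) - \<mu>0)\<^sup>2)"
      by (rule integral_cong_AE) (use AEq HPm in \<open>auto elim: AE_mp\<close>)
    also have "\<dots> = integral\<^sup>L (distr MN P Phi) (\<lambda>\<omega>. (H \<omega> - \<mu>0)\<^sup>2)"
      by (rule integral_distr[symmetric, OF Phim m2])
    also have "\<dots> = integral\<^sup>L P (\<lambda>\<omega>. (\<Sum>i<n. \<omega> i)\<^sup>2 / (real N)\<^sup>2)"
      by (simp add: PhiD HS power_divide)
    also have "\<dots> = real n * s / (real N)\<^sup>2"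
      using SM(4) unfolding P_def s_def by (simp add: integral_divide_zero)
    finally show ?thesis .
  qed
  define V where "V = real n * s / (real N)\<^sup>2"
  have sV: "sqrt V = sqrt (real n) * \<sigma> / real N"
    using N0 s0 by (simp add: V_def \<sigma>_def real_sqrt_mult real_sqrt_divide)
  have sV0: "sqrt V > 0" using sV n1 \<sigma>0 N0 by simp
  have Fy: "measure MN {x \<in> space MN. (D x - \<mu>0) / sqrt V \<le> y}
      = measure P {\<omega> \<in> space P. (\<Sum>i<n. \<omega> i) / (sqrt (real n) * \<sigma>) \<le> y}" for y
  proof -
    define B where "B = {\<omega> \<in> space P. (H \<omega> - \<mu>0) / sqrt V \<le> y}"
    have Bs: "B \<in> sets P" unfolding B_def by measurable
    have "measure MN {x \<in> space MN. (D x - \<mu>0) / sqrt V \<le> y} = measure MN {x \<in> space MN. (H (Phi x) - \<mu>0) / sqrt V \<le> y}"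
    proof (rule measure_eq_AE)
      show "AE x in MN. x \<in> {x \<in> space MN. (D x - \<mu>0) / sqrt V \<le> y} \<longleftrightarrow> x \<in> {x \<in> space MN. (H (Phi x) - \<mu>0) / sqrt V \<le> y}"
        using AEq by (auto elim: AE_mp)
      show "{x \<in> space MN. (D x - \<mu>0) / sqrt V \<le> y} \<in> sets MN" by measurable
      show "{x \<in> space MN. (H (Phi x) - \<mu>0) / sqrt V \<le> y} \<in> sets MN" using HPm by measurable
    qed
    also have "{x \<in> space MN. (H (Phi x) - \<mu>0) / sqrt V \<le> y} = Phi -` B \<inter> space MN"
      using measurable_space[OF Phim] by (auto simp: B_def)
    also have "measure MN (Phi -` B \<inter> space MN) = measure (distr MN P Phi) B"
      by (rule measure_distr[symmetric, OF Phim Bs])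
    also have "\<dots> = measure P B" by (simp add: PhiD)
    also have "B = {\<omega> \<in> space P. (\<Sum>i<n. \<omega> i) / (sqrt (real n) * \<sigma>) \<le> y}"
      unfolding B_def HS sV using N0 by (simp add: field_simps)
    finally show ?thesis .
  qed
  define \<rho> where "\<rho> = integral\<^sup>L (mu ell) (\<lambda>t. \<bar>t\<bar> ^ 3)"
  have \<rho>v: "\<rho> = s * (ell\<^sup>2 + (1 - \<bar>ell\<bar>)\<^sup>2)" unfolding \<rho>_def s_def by (rule mu_moments(6)[OF l])
  have be: "\<bar>measure P {\<omega> \<in> space P. (\<Sum>i<n. \<omega> i) / (sqrt (real n) * \<sigma>) \<le> y} - std_normal_cdf y\<bar>
      \<le> C * \<rho> / (\<sigma> ^ 3 * sqrt (real n))" for y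
  proof -
    have "prob_space (mu ell) \<and> sets (mu ell) = sets borel \<and>
       integrable (mu ell) (\<lambda>t. t) \<and> integral\<^sup>L (mu ell) (\<lambda>t. t) = 0 \<and>
       integrable (mu ell) (\<lambda>t. t\<^sup>2) \<and> \<sigma> > 0 \<and> integral\<^sup>L (mu ell) (\<lambda>t. t\<^sup>2) = \<sigma>\<^sup>2 \<and>
       integrable (mu ell) (\<lambda>t. \<bar>t\<bar> ^ 3) \<and> \<rho> = integral\<^sup>L (mu ell) (\<lambda>t. \<bar>t\<bar> ^ 3) \<and> n \<ge> 1"
      using mu_prob mu_moments[OF l] \<sigma>0 s0 n1 by (simp add: \<sigma>_def s_def \<rho>_def)
    then show ?thesis using BE unfolding berry_esseen_const_def P_def by blast
  qed
  have bound: "C * \<rho> / (\<sigma> ^ 3 * sqrt (real n)) = C / sqrt (real N - 2) * ((ell\<^sup>2 + (1 - \<bar>ell\<bar>)\<^sup>2) / sqrt (\<bar>ell\<bar> - ell\<^sup>2))"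
  proof -
    have rn: "real N - 2 = real n" using N3 by (simp add: n_def of_nat_diff)
    have s3: "\<sigma> ^ 3 = s * \<sigma>" using s0 by (simp add: \<sigma>_def power3_eq_cube)
    have sn: "sqrt (real n) > 0" using n1 by simp
    show ?thesis unfolding rn \<rho>v s3 s_def[symmetric] \<sigma>_def[symmetric] using s0 \<sigma>0 sn
      by (simp add: field_simps)
  qed
  have MNe: "node_law N = MN" by (simp add: MN_def node_law_Uu)
  show ?thesis
    unfolding Let_def MNe D_def[symmetric] intD \<mu>0_def[symmetric] intV V_def[symmetric]
  proof (intro allI)
    fix y
    show "\<bar>measure MN {x \<in> space MN. (D x - \<mu>0) / sqrt V \<le> y} - std_normal_cdf y\<bar>
        \<le> C / sqrt (real N - 2) * ((ell\<^sup>2 + (1 - \<bar>ell\<bar>)\<^sup>2) / sqrt (\<bar>ell\<bar> - ell\<^sup>2))"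
      unfolding Fy bound[symmetric] by (rule be)
  qed
qed

end
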